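(* Let $m\ge n$, let $\Gamma$ be a subset of $M_{m\times n}(\mathbb{C})$, and let $\Gamma_d$ be the set of all matrices in $\Gamma$ whose singular values are distinct. Suppose that for any two matrices $A,B\in\Gamma$ there exists a polynomial $p(x)=\sum_{i=0}^{k}A_i x^i$ with $A_i\in M_{m\times n}(\mathbb{C})$, considered on $[0,1]$, such that $p(0)=A$, $p(1)=B$ and $p([0,1])\subset\Gamma$. Then $\Gamma_d$ is dense in $\Gamma$ if and only if the closure $\overline{\Gamma}$ contains a matrix whose singular values are distinct.
   Context: $M_{m\times n}(\mathbb{C})$ denotes the set of $m\times n$ complex matrices with the topology induced by the Frobenius norm; throughout $m\ge n$. The singular values of $A\in M_{m\times n}(\mathbb{C})$ are the $n$ nonnegative square roots of the eigenvalues of $A^{\ast}A$, counted with multiplicity; they are distinct if these $n$ values are pairwise different. *)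

theory Defs
  imports "HOL-Analysis.Analysis" "HOL-Computational_Algebra.Computational_Algebra"
begin

text \<open>m x n complex matrices are rendered as complex^'n^'m (rows indexed by 'm).
  The norm on this type is the Frobenius norm.\<close>

definition adjoint_mat :: "complex^'n^'m \<Rightarrow> complex^'m^'n" where
  "adjoint_mat A = (\<chi> i j. cnj (A $ j $ i))"

definition charpoly_mat :: "complex^'n^'n \<Rightarrow> complex poly" where
  "charpoly_mat B = det (\<chi> i j. (if i = j then [:0, 1:] else 0) - [:B $ i $ j:])"

definition singular_values :: "complex^'n^'m \<Rightarrow> real multiset" where
  "singular_values A =
     image_mset (\<lambda>z. sqrt (Re z)) (proots (charpoly_mat (adjoint_mat A ** A)))"

definition distinct_singular_values :: "complex^'n^'m \<Rightarrow> bool" where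
  "distinct_singular_values A \<longleftrightarrow> (\<forall>x. count (singular_values A) x \<le> 1)"

end

theory Submission
  imports Defs "HOL-Computational_Algebra.Field_as_Ring" "Subresultants.Subresultant_Gcd"
begin

no_notation Matrix.vec_index (infixl "$" 100)
no_notation fps_nth (infixl "$" 75)



definition ringcl :: "(('x \<Rightarrow> 'a::comm_ring_1) \<Rightarrow> bool) \<Rightarrow> bool" where
  "ringcl P \<longleftrightarrow> (\<forall>c. P (\<lambda>x. c)) \<and> (\<forall>f g. P f \<longrightarrow> P g \<longrightarrow> P (\<lambda>x. f x + g x))
     \<and> (\<forall>f g. P f \<longrightarrow> P g \<longrightarrow> P (\<lambda>x. f x * g x))"

lemma ringcl_const: "ringcl P \<Longrightarrow> P (\<lambda>x. c)" unfolding ringcl_def by blast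
lemma ringcl_add: "ringcl P \<Longrightarrow> P f \<Longrightarrow> P g \<Longrightarrow> P (\<lambda>x. f x + g x)" unfolding ringcl_def by blast
lemma ringcl_mult: "ringcl P \<Longrightarrow> P f \<Longrightarrow> P g \<Longrightarrow> P (\<lambda>x. f x * g x)" unfolding ringcl_def by blast
lemma ringcl_uminus: assumes P: "ringcl P" and f: "P f" shows "P (\<lambda>x. - f x)"
proof -
  have c: "P (\<lambda>x. -1)" by (rule ringcl_const[of P "-1", OF P])
  have "P (\<lambda>x. (-1) * f x)" by (rule ringcl_mult[of P "\<lambda>x. -1" f, OF P c f])
  then show ?thesis by simp
qed
lemma ringcl_diff: assumes P: "ringcl P" and f: "P f" and g: "P g" shows "P (\<lambda>x. f x - g x)"
proof -
  have "P (\<lambda>x. f x + (- g x))"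
    by (rule ringcl_add[of P f "\<lambda>x. - g x", OF P f ringcl_uminus[of P g, OF P g]])
  then show ?thesis by simp
qed

lemma ringcl_sum: assumes P: "ringcl P" and f: "\<And>i. i \<in> I \<Longrightarrow> P (f i)" shows "P (\<lambda>x. \<Sum>i\<in>I. f i x)"
proof (cases "finite I")
  case True then show ?thesis using f
  proof (induction I rule: finite_induct)
    case empty then show ?case using ringcl_const[of P 0, OF P] by simp
  next
    case (insert a F)
    have "P (\<lambda>x. f a x + (\<Sum>i\<in>F. f i x))"
      by (rule ringcl_add[of P "f a" "\<lambda>x. \<Sum>i\<in>F. f i x", OF P]) (use insert in auto)
    then show ?case using insert(1,2) by simp
  qed
next
  case False then show ?thesis using ringcl_const[of P 0, OF P] by simp
qed

lemma ringcl_prod: assumes P: "ringcl P" and f: "\<And>i. i \<in> I \<Longrightarrow> P (f i)" shows "P (\<lambda>x. \<Prod>i\<in>I. f i x)"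
proof (cases "finite I")
  case True then show ?thesis using f
  proof (induction I rule: finite_induct)
    case empty then show ?case using ringcl_const[of P 1, OF P] by simp
  next
    case (insert a F)
    have "P (\<lambda>x. f a x * (\<Prod>i\<in>F. f i x))"
      by (rule ringcl_mult[of P "f a" "\<lambda>x. \<Prod>i\<in>F. f i x", OF P]) (use insert in auto)
    then show ?case using insert(1,2) by simp
  qed
next
  case False then show ?thesis using ringcl_const[of P 1, OF P] by simp
qed

lemma ringcl_if: "P f \<Longrightarrow> P g \<Longrightarrow> P (\<lambda>x. if C then f x else g x)"
  by (cases C) simp_all

definition pcl :: "(('x \<Rightarrow> 'a::comm_ring_1) \<Rightarrow> bool) \<Rightarrow> ('x \<Rightarrow> 'a poly) \<Rightarrow> bool" where
  "pcl P F \<longleftrightarrow> (\<forall>k. P (\<lambda>x. coeff (F x) k))"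

lemma ringcl_pcl: fixes P :: "('x \<Rightarrow> 'a::comm_ring_1) \<Rightarrow> bool" assumes P: "ringcl P" shows "ringcl (pcl P)"
proof -
  have 1: "pcl P (\<lambda>x. c)" for c unfolding pcl_def using ringcl_const[of P, OF P] by simp
  have 2: "pcl P (\<lambda>x. f x + g x)" if f: "pcl P f" and g: "pcl P g" for f g
    unfolding pcl_def
  proof
    fix k
    have "P (\<lambda>x. coeff (f x) k + coeff (g x) k)"
      using ringcl_add[OF P, of "\<lambda>x. coeff (f x) k" "\<lambda>x. coeff (g x) k"] f g unfolding pcl_def by blast
    then show "P (\<lambda>x. coeff (f x + g x) k)" by simp
  qed
  have 3: "pcl P (\<lambda>x. f x * g x)" if f: "pcl P f" and g: "pcl P g" for f g
    unfolding pcl_def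
  proof
    fix k
    have "P (\<lambda>x. coeff (f x) i * coeff (g x) (k - i))" for i
      using ringcl_mult[OF P, of "\<lambda>x. coeff (f x) i" "\<lambda>x. coeff (g x) (k - i)"] f g unfolding pcl_def by blast
    then have "P (\<lambda>x. \<Sum>i\<le>k. coeff (f x) i * coeff (g x) (k - i))"
      by (intro ringcl_sum[OF P])
    then show "P (\<lambda>x. coeff (f x * g x) k)" by (simp add: coeff_mult)
  qed
  show ?thesis unfolding ringcl_def using 1 2 3 by blast
qed

lemma pcl_pConst: assumes "ringcl P" "P f" shows "pcl P (\<lambda>x. [:f x:])"
  unfolding pcl_def
proof
  fix k show "P (\<lambda>x. coeff [:f x:] k)"
    by (cases k) (simp_all add: assms(2) ringcl_const[OF assms(1)])
qed

lemma ringcl_det: assumes P: "ringcl P" and e: "\<And>i j. P (\<lambda>x. N x $ i $ j)"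
  shows "P (\<lambda>x. Determinants.det (N x))"
proof -
  have "P (\<lambda>x. of_int (sign p) * (\<Prod>i\<in>UNIV. N x $ i $ p i))" for p
  proof -
    have "P (\<lambda>x. \<Prod>i\<in>UNIV. N x $ i $ p i)"
      using ringcl_prod[OF P, of UNIV "\<lambda>i x. N x $ i $ p i"] e by blast
    from ringcl_mult[of P "\<lambda>x. of_int (sign p)", OF P ringcl_const[of P, OF P] this] show ?thesis by simp
  qed
  then have "P (\<lambda>x. \<Sum>p\<in>{p. p permutes UNIV}. of_int (sign p) * (\<Prod>i\<in>UNIV. N x $ i $ p i))"
    using ringcl_sum[OF P, of "{p. p permutes UNIV}" "\<lambda>p x. of_int (sign p) * (\<Prod>i\<in>UNIV. N x $ i $ p i)"]
    by blast
  then show ?thesis unfolding Determinants.det_def .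
qed

lemma ringcl_det_jnf: assumes P: "ringcl P" and N: "\<And>x. N x \<in> carrier_mat d d"
  and e: "\<And>i j. i < d \<Longrightarrow> j < d \<Longrightarrow> P (\<lambda>x. N x $$ (i, j))"
  shows "P (\<lambda>x. Determinant.det (N x))"
proof -
  have "P (\<lambda>x. signof p * (\<Prod>i = 0..<d. N x $$ (i, p i)))" if p: "p \<in> {p. p permutes {0..<d}}" for p
  proof -
    have "P (\<lambda>x. N x $$ (i, p i))" if "i \<in> {0..<d}" for i
      using p that e by (simp add: permutes_in_image)
    then have "P (\<lambda>x. \<Prod>i = 0..<d. N x $$ (i, p i))"
      using ringcl_prod[OF P, of "{0..<d}" "\<lambda>i x. N x $$ (i, p i)"] by blast
    from ringcl_mult[of P "\<lambda>x. signof p", OF P ringcl_const[of P, OF P] this] show ?thesis by simp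
  qed
  then have "P (\<lambda>x. \<Sum>p | p permutes {0..<d}. signof p * (\<Prod>i = 0..<d. N x $$ (i, p i)))"
    using ringcl_sum[OF P, of "{p. p permutes {0..<d}}" "\<lambda>p x. signof p * (\<Prod>i = 0..<d. N x $$ (i, p i))"]
    by blast
  then show ?thesis using det_def'[OF N] by simp
qed

definition gram :: "complex^'n^'m \<Rightarrow> complex^'n^'n" where
  "gram A = adjoint_mat A ** A"

definition cpA :: "complex^'n^'m \<Rightarrow> complex poly" where
  "cpA A = charpoly_mat (gram A)"

definition Delta :: "complex^'n^'m \<Rightarrow> complex" where
  "Delta A = resultant_sub CARD('n) (CARD('n) - 1) (cpA A) (pderiv (cpA A))"

lemma gram_entry: "gram A $ i $ j = (\<Sum>k\<in>UNIV. cnj (A $ k $ i) * A $ k $ j)"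
  by (simp add: gram_def adjoint_mat_def matrix_matrix_mult_def)

lemma Delta_cl:
  fixes a :: "'x \<Rightarrow> complex^'n^'m"
  assumes P: "ringcl P" and e: "\<And>i j. P (\<lambda>x. a x $ i $ j)" and c: "\<And>i j. P (\<lambda>x. cnj (a x $ i $ j))"
  shows "P (\<lambda>x. Delta (a x))"
proof -
  have g: "P (\<lambda>x. gram (a x) $ i $ j)" for i j
  proof -
    have "P (\<lambda>x. cnj (a x $ k $ i) * a x $ k $ j)" for k
      by (rule ringcl_mult[of P "\<lambda>x. cnj (a x $ k $ i)" "\<lambda>x. a x $ k $ j", OF P c e])
    then have "P (\<lambda>x. \<Sum>k\<in>UNIV. cnj (a x $ k $ i) * a x $ k $ j)"
      using ringcl_sum[of P UNIV "\<lambda>k x. cnj (a x $ k $ i) * a x $ k $ j", OF P] by simp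
    then show ?thesis unfolding gram_entry .
  qed
  have PP: "ringcl (pcl P)" by (rule ringcl_pcl[OF P])
  have ent: "pcl P (\<lambda>x. (\<chi> i j. (if i = j then [:0, 1:] else 0) - [:gram (a x) $ i $ j:]) $ i $ j)" for i j
  proof -
    have "pcl P (\<lambda>x. (if i = j then [:0, 1:] else 0) - [:gram (a x) $ i $ j:])"
      by (rule ringcl_diff[of "pcl P" "\<lambda>x. (if i = j then [:0, 1:] else 0)" "\<lambda>x. [:gram (a x) $ i $ j:]",
           OF PP ringcl_const[OF PP] pcl_pConst[OF P g]])
    then show ?thesis by simp
  qed
  have cp: "pcl P (\<lambda>x. cpA (a x))"
    unfolding cpA_def charpoly_mat_def
    by (rule ringcl_det[of "pcl P", OF PP ent])
  then have c1: "P (\<lambda>x. coeff (cpA (a x)) k)" for k unfolding pcl_def by blast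
  have c2: "P (\<lambda>x. coeff (pderiv (cpA (a x))) k)" for k
    unfolding coeff_pderiv
    by (rule ringcl_mult[of P "\<lambda>x. of_nat (Suc k)" "\<lambda>x. coeff (cpA (a x)) (Suc k)", OF P ringcl_const[OF P] c1])
  have z: "P (\<lambda>x. 0)" by (rule ringcl_const[OF P])
  define d where "d = CARD('n) + (CARD('n) - 1)"
  show ?thesis unfolding Delta_def resultant_sub_def
  proof (rule ringcl_det_jnf[of P, OF P, where d = d])
    fix x show "sylvester_mat_sub CARD('n) (CARD('n) - 1) (cpA (a x)) (pderiv (cpA (a x))) \<in> carrier_mat d d"
      unfolding d_def by (rule sylvester_mat_sub_carrier)
  next
    fix i j assume ij: "i < d" "j < d"
    show "P (\<lambda>x. sylvester_mat_sub CARD('n) (CARD('n) - 1) (cpA (a x)) (pderiv (cpA (a x))) $$ (i, j))"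
      using ij unfolding d_def
      apply (simp only: sylvester_mat_sub_index)
      apply (rule ringcl_if, rule ringcl_if, rule c1, rule z, rule ringcl_if, rule c2, rule z)
      done
  qed
qed




lemma poly_det: "poly (Determinants.det N) z = Determinants.det (\<chi> i j. poly (N $ i $ j) z)"
  unfolding Determinants.det_def by (simp add: poly_sum poly_prod)

lemma charpoly_eval: "poly (charpoly_mat B) z = Determinants.det (\<chi> i j. (if i = j then z else 0) - B $ i $ j)"
  unfolding charpoly_mat_def poly_det
  by (rule arg_cong[where f = Determinants.det]) (simp add: Finite_Cartesian_Product.vec_eq_iff fun_eq_iff)

lemma charpoly_root_eigvec:
  assumes "poly (charpoly_mat B) z = 0"
  shows "\<exists>v. v \<noteq> 0 \<and> B *v v = z *s v"
proof -
  define N where "N = (\<chi> i j. (if i = j then z else 0) - B $ i $ j)"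
  have "Determinants.det N = 0" using assms unfolding charpoly_eval N_def .
  then have "\<not> inj (\<lambda>v. N *v v)"
    using det_nz_iff_inj_gen[of "\<lambda>v. N *v v"] by simp
  then obtain x y where xy: "x \<noteq> y" "N *v x = N *v y" unfolding inj_def by blast
  define v where "v = x - y"
  have v0: "v \<noteq> 0" using xy(1) unfolding v_def by simp
  have "N *v v = 0" unfolding v_def using xy(2) by (simp add: matrix_vector_mult_diff_distrib)
  then have h: "(\<chi> i. z * v $ i - (\<Sum>j\<in>UNIV. B $ i $ j * v $ j)) = 0"
    unfolding N_def
    by (simp add: matrix_vector_mult_def sum_subtractf if_distrib[of "\<lambda>a. a * _"]
        left_diff_distrib cong: if_cong)
  have "\<forall>i. z * v $ i - (\<Sum>j\<in>UNIV. B $ i $ j * v $ j) = 0"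
  proof
    fix i
    from arg_cong[OF h, of "\<lambda>w. w $ i"] show "z * v $ i - (\<Sum>j\<in>UNIV. B $ i $ j * v $ j) = 0" by simp
  qed
  then have "(B *v v) $ i = (z *s v) $ i" for i
    by (simp add: matrix_vector_mult_def)
  then have "B *v v = z *s v" by (simp add: Finite_Cartesian_Product.vec_eq_iff)
  then show ?thesis using v0 by blast
qed


lemma gram_quad:
  fixes A :: "complex^'n^'m" and v :: "complex^'n"
  shows "(\<Sum>i\<in>UNIV. cnj (v $ i) * (gram A *v v) $ i) = (\<Sum>k\<in>UNIV. cnj ((A *v v) $ k) * (A *v v) $ k)"
proof -
  have "(\<Sum>i\<in>UNIV. cnj (v $ i) * (gram A *v v) $ i) =
        (\<Sum>i\<in>UNIV. \<Sum>j\<in>UNIV. \<Sum>k\<in>UNIV. cnj (v $ i) * (cnj (A $ k $ i) * A $ k $ j * v $ j))"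
    by (simp add: matrix_vector_mult_def gram_entry sum_distrib_left sum_distrib_right mult.assoc)
  also have "\<dots> = (\<Sum>i\<in>UNIV. \<Sum>k\<in>UNIV. \<Sum>j\<in>UNIV. cnj (v $ i) * (cnj (A $ k $ i) * A $ k $ j * v $ j))"
    by (rule sum.cong[OF refl], rule sum.swap)
  also have "\<dots> = (\<Sum>k\<in>UNIV. \<Sum>i\<in>UNIV. \<Sum>j\<in>UNIV. cnj (v $ i) * (cnj (A $ k $ i) * A $ k $ j * v $ j))"
    by (rule sum.swap)
  also have "\<dots> = (\<Sum>k\<in>UNIV. \<Sum>j\<in>UNIV. \<Sum>i\<in>UNIV. cnj (v $ i) * (cnj (A $ k $ i) * A $ k $ j * v $ j))"
    by (rule sum.cong[OF refl], rule sum.swap)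
  also have "\<dots> = (\<Sum>k\<in>UNIV. cnj ((A *v v) $ k) * (A *v v) $ k)"
    by (simp add: matrix_vector_mult_def cnj_sum sum_product mult_ac)
  finally show ?thesis .
qed

lemma cnj_mult_self: "cnj x * x = complex_of_real ((cmod x)^2)"
  by (subst complex_norm_square) (rule mult.commute)

lemma gram_eig:
  fixes A :: "complex^'n^'m" and v :: "complex^'n"
  assumes ev: "gram A *v v = z *s v" and v0: "v \<noteq> 0"
  shows "Im z = 0 \<and> Re z \<ge> 0"
proof -
  define s1 where "s1 = (\<Sum>i\<in>UNIV. (cmod (v $ i))^2)"
  define s2 where "s2 = (\<Sum>k\<in>UNIV. (cmod ((A *v v) $ k))^2)"
  have e1: "(\<Sum>i\<in>UNIV. cnj (v $ i) * (gram A *v v) $ i) = z * of_real s1"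
  proof -
    have "(\<Sum>i\<in>UNIV. cnj (v $ i) * (z *s v) $ i) = (\<Sum>i\<in>UNIV. z * (cnj (v $ i) * v $ i))"
      by (simp add: mult_ac)
    also have "\<dots> = z * of_real s1" unfolding s1_def cnj_mult_self of_real_sum sum_distrib_left ..
    finally show ?thesis unfolding ev .
  qed
  have e2: "(\<Sum>k\<in>UNIV. cnj ((A *v v) $ k) * (A *v v) $ k) = of_real s2"
    unfolding s2_def cnj_mult_self of_real_sum ..
  have s2: "s2 \<ge> 0" unfolding s2_def by (simp add: sum_nonneg)
  obtain i where "v $ i \<noteq> 0" using v0 by (metis Finite_Cartesian_Product.vec_eq_iff zero_index)
  then have "(cmod (v $ i))^2 > 0" by simp
  moreover have "(cmod (v $ i))^2 \<le> s1" unfolding s1_def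
    by (rule member_le_sum) auto
  ultimately have s1: "s1 > 0" by linarith
  have "z * of_real s1 = of_real s2" using gram_quad[of v A] e1 e2 by simp
  then have "z = of_real (s2 / s1)" using s1 by (simp add: field_simps)
  then show ?thesis using s1 s2 by simp
qed


lemma charpoly_deg:
  fixes B :: "complex^'n^'n"
  shows "degree (charpoly_mat B) = CARD('n) \<and> coeff (charpoly_mat B) CARD('n) = 1"
proof -
  define N :: "complex poly^'n^'n" where "N = (\<chi> i j. (if i = j then [:0, 1:] else 0) - [:B $ i $ j:])"
  define T where "T p = of_int (sign p) * (\<Prod>i\<in>UNIV. N $ i $ p i)" for p :: "'n \<Rightarrow> 'n"
  define S where "S = {p. p permutes (UNIV :: 'n set)}"
  have cp: "charpoly_mat B = (\<Sum>p\<in>S. T p)"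
    unfolding charpoly_mat_def Determinants.det_def N_def T_def S_def ..
  have degN: "degree (N $ i $ j) \<le> (if i = j then 1 else 0)" for i j
    unfolding N_def by (cases "i = j") (auto intro: order.trans[OF degree_diff_le])
  have Tlow: "degree (T p) < CARD('n)" if p: "p \<in> S" "p \<noteq> id" for p
  proof -
    have "degree (T p) \<le> degree (\<Prod>i\<in>UNIV. N $ i $ p i)"
      unfolding T_def by (rule order.trans[OF degree_mult_le]) simp
    also have "\<dots> \<le> (\<Sum>i\<in>UNIV. degree (N $ i $ p i))"
      using degree_prod_sum_le[of UNIV "\<lambda>i. N $ i $ p i"] by simp
    also have "\<dots> \<le> (\<Sum>i\<in>UNIV. (if p i = i then 1 else 0))"
    proof (rule sum_mono)
      fix i show "degree (N $ i $ p i) \<le> (if p i = i then 1 else 0)"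
        using degN[of i "p i"] by (cases "p i = i") auto
    qed
    also have "\<dots> = card {i. p i = i}"
      by (simp add: sum.If_cases)
    also have "\<dots> < CARD('n)"
    proof (rule psubset_card_mono)
      have "\<exists>i. p i \<noteq> i" using p(2) by (auto simp: fun_eq_iff)
      then show "{i. p i = i} \<subset> UNIV" by auto
    qed simp
    finally show ?thesis .
  qed
  have Nii: "N $ i $ i = [:- B $ i $ i, 1:]" for i
    unfolding N_def by simp
  have Tid: "T id = (\<Prod>i\<in>UNIV. [:- B $ i $ i, 1:])"
    unfolding T_def by (simp add: Nii)
  have mon: "degree (T id) = CARD('n) \<and> coeff (T id) CARD('n) = 1"
    using degree_prod_sum_monic[of UNIV "\<lambda>i. [:- B $ i $ i, 1:]"] unfolding Tid by simp
  have idS: "id \<in> S" unfolding S_def by (simp add: permutes_id)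
  have split: "charpoly_mat B = T id + (\<Sum>p\<in>S - {id}. T p)"
    unfolding cp by (rule sum.remove[OF _ idS]) (simp add: S_def finite_permutations)
  have crest: "coeff (\<Sum>p\<in>S - {id}. T p) k = 0" if "k \<ge> CARD('n)" for k
    unfolding coeff_sum
  proof (rule sum.neutral, rule ballI)
    fix p assume "p \<in> S - {id}"
    then have "degree (T p) < k" using Tlow[of p] that by auto
    then show "coeff (T p) k = 0" by (rule coeff_eq_0)
  qed
  have ck: "coeff (charpoly_mat B) k = coeff (T id) k" if "k \<ge> CARD('n)" for k
    unfolding split using crest[OF that] by simp
  have c1: "coeff (charpoly_mat B) CARD('n) = 1" using ck[of "CARD('n)"] mon by simp
  have "degree (charpoly_mat B) \<le> CARD('n)"
  proof (rule degree_le, intro allI impI)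
    fix k assume "CARD('n) < k"
    then show "coeff (charpoly_mat B) k = 0" using ck[of k] mon by (simp add: coeff_eq_0)
  qed
  moreover have "CARD('n) \<le> degree (charpoly_mat B)" by (rule le_degree) (simp add: c1)
  ultimately show ?thesis using c1 by simp
qed

lemma common_root:
  fixes q r :: "complex poly"
  assumes "q \<noteq> 0"
  shows "degree (gcd q r) \<noteq> 0 \<longleftrightarrow> (\<exists>z. poly q z = 0 \<and> poly r z = 0)"
proof
  assume d: "degree (gcd q r) \<noteq> 0"
  then have "\<not> constant (poly (gcd q r))" by (simp add: constant_degree)
  then obtain z where z: "poly (gcd q r) z = 0" using fundamental_theorem_of_algebra by blast
  then have "[:-z, 1:] dvd gcd q r" by (simp add: poly_eq_0_iff_dvd)
  then have "[:-z, 1:] dvd q" "[:-z, 1:] dvd r" by (auto intro: dvd_trans)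
  then show "\<exists>z. poly q z = 0 \<and> poly r z = 0" by (auto simp: poly_eq_0_iff_dvd)
next
  assume "\<exists>z. poly q z = 0 \<and> poly r z = 0"
  then obtain z where "poly q z = 0" "poly r z = 0" by blast
  then have "[:-z, 1:] dvd gcd q r" by (simp add: poly_eq_0_iff_dvd)
  moreover have "gcd q r \<noteq> 0" using assms by simp
  ultimately have "degree [:-z, 1:] \<le> degree (gcd q r)" using divides_degree by blast
  then show "degree (gcd q r) \<noteq> 0" by simp
qed

lemma cpA_deg: "degree (cpA (A :: complex^'n^'m)) = CARD('n) \<and> coeff (cpA A) CARD('n) = 1"
  unfolding cpA_def by (rule charpoly_deg)

lemma cpA_nz: "cpA A \<noteq> 0"
  using cpA_deg[of A] by auto

lemma Delta_iff: "Delta (A :: complex^'n^'m) \<noteq> 0 \<longleftrightarrow> rsquarefree (cpA A)"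
proof -
  have "Delta A = resultant (cpA A) (pderiv (cpA A))"
    unfolding Delta_def resultant_sub using cpA_deg[of A] by (simp add: degree_pderiv)
  then have "Delta A \<noteq> 0 \<longleftrightarrow> \<not> (\<exists>z. poly (cpA A) z = 0 \<and> poly (pderiv (cpA A)) z = 0)"
    using resultant_0_gcd common_root[OF cpA_nz] by metis
  then show ?thesis using rsquarefree_roots by blast
qed

lemma cpA_roots: assumes "poly (cpA A) z = 0" shows "Im z = 0 \<and> Re z \<ge> 0"
proof -
  obtain v where "v \<noteq> 0" "gram A *v v = z *s v"
    using charpoly_root_eigvec[of "gram A" z] assms unfolding cpA_def by blast
  then show ?thesis using gram_eig by blast
qed

lemma distinct_iff: "distinct_singular_values (A :: complex^'n^'m) \<longleftrightarrow> rsquarefree (cpA A)"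
proof -
  define M where "M = proots (cpA A)"
  define g where "g = (\<lambda>z::complex. sqrt (Re z))"
  have sv: "singular_values A = image_mset g M"
    unfolding singular_values_def M_def g_def cpA_def gram_def ..
  have setM: "set_mset M = {z. poly (cpA A) z = 0}" unfolding M_def using set_count_proots[OF cpA_nz] .
  have inj: "inj_on g (set_mset M)"
  proof (rule inj_onI)
    fix x y assume "x \<in> set_mset M" "y \<in> set_mset M" "g x = g y"
    then show "x = y" using cpA_roots[of A x] cpA_roots[of A y] unfolding setM g_def
      by (auto intro: complex_eqI)
  qed
  have cnt: "count (image_mset g M) (g a) = count M a" if "a \<in># M" for a
  proof -
    have "g -` {g a} \<inter> set_mset M = {a}" using inj that by (auto dest: inj_onD)
    then show ?thesis by (simp add: count_image_mset)
  qed
  have cnt0: "count (image_mset g M) y = 0" if "y \<notin> g ` set_mset M" for y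
    using that by (simp add: count_image_mset) (auto intro!: sum.neutral)
  have "distinct_singular_values A \<longleftrightarrow> (\<forall>a. count M a \<le> 1)"
    unfolding distinct_singular_values_def sv
  proof
    assume h: "\<forall>x. count (image_mset g M) x \<le> 1"
    show "\<forall>a. count M a \<le> 1"
    proof
      fix a show "count M a \<le> 1"
        using h[rule_format, of "g a"] cnt[of a] by (cases "a \<in># M") (auto simp: not_in_iff)
    qed
  next
    assume h: "\<forall>a. count M a \<le> 1"
    show "\<forall>x. count (image_mset g M) x \<le> 1"
    proof
      fix y show "count (image_mset g M) y \<le> 1"
        using h cnt cnt0 by (cases "y \<in> g ` set_mset M") auto
    qed
  qed
  also have "\<dots> \<longleftrightarrow> rsquarefree (cpA A)"
    unfolding rsquarefree_def M_def count_proots[OF cpA_nz] using cpA_nz[of A]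
    by (metis le_Suc_eq le_zero_eq One_nat_def order_refl zero_le_one)
  finally show ?thesis .
qed




lemma D_iff: "distinct_singular_values A \<longleftrightarrow> Delta A \<noteq> 0"
  using Delta_iff distinct_iff by blast

lemma ringcl_cont: "ringcl (\<lambda>f :: 'x::topological_space \<Rightarrow> complex. continuous_on UNIV f)"
  unfolding ringcl_def by (auto intro: continuous_on_add continuous_on_mult)

lemma Delta_cont: "continuous_on UNIV (Delta :: complex^'n^'m \<Rightarrow> complex)"
proof -
  have e: "continuous_on UNIV (\<lambda>x::complex^'n^'m. x $ i $ j)" for i j
    by (intro continuous_on_component continuous_on_id)
  have "continuous_on UNIV (\<lambda>x::complex^'n^'m. Delta (id x))"
    by (rule Delta_cl[OF ringcl_cont]) (simp_all add: e continuous_on_cnj)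
  then show ?thesis by simp
qed

lemma D_open: "open {A :: complex^'n^'m. distinct_singular_values A}"
  unfolding D_iff using open_Collect_neq[OF Delta_cont continuous_on_const] .

definition ispoly :: "(real \<Rightarrow> complex) \<Rightarrow> bool" where
  "ispoly f \<longleftrightarrow> (\<exists>r. \<forall>t. f t = poly r (complex_of_real t))"

lemma ringcl_ispoly: "ringcl ispoly"
  unfolding ringcl_def ispoly_def
proof (intro conjI allI impI)
  fix c :: complex show "\<exists>r. \<forall>t. c = poly r (complex_of_real t)" by (rule exI[of _ "[:c:]"]) simp
next
  fix f g :: "real \<Rightarrow> complex"
  assume "\<exists>r. \<forall>t. f t = poly r (complex_of_real t)" "\<exists>r. \<forall>t. g t = poly r (complex_of_real t)"
  then obtain r1 r2 where "\<forall>t. f t = poly r1 (complex_of_real t)" "\<forall>t. g t = poly r2 (complex_of_real t)" by blast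
  then show "\<exists>r. \<forall>t. f t + g t = poly r (complex_of_real t)" by (intro exI[of _ "r1 + r2"]) simp
next
  fix f g :: "real \<Rightarrow> complex"
  assume "\<exists>r. \<forall>t. f t = poly r (complex_of_real t)" "\<exists>r. \<forall>t. g t = poly r (complex_of_real t)"
  then obtain r1 r2 where "\<forall>t. f t = poly r1 (complex_of_real t)" "\<forall>t. g t = poly r2 (complex_of_real t)" by blast
  then show "\<exists>r. \<forall>t. f t * g t = poly r (complex_of_real t)" by (intro exI[of _ "r1 * r2"]) simp
qed

lemma ispoly_monom: "ispoly (\<lambda>t. complex_of_real (t ^ i) * c)"
  unfolding ispoly_def by (rule exI[of _ "monom c i"]) (simp add: poly_monom)

lemma path_Delta_poly:
  fixes C :: "nat \<Rightarrow> complex^'n^'m"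
  shows "\<exists>r. \<forall>t. Delta (\<Sum>i\<le>k. (t ^ i) *\<^sub>R C i) = poly r (complex_of_real t)"
proof -
  have e: "ispoly (\<lambda>t. (\<Sum>i\<le>k. (t ^ i) *\<^sub>R C i) $ a $ b)" for a b
  proof -
    have "ispoly (\<lambda>t. \<Sum>i\<le>k. complex_of_real (t ^ i) * C i $ a $ b)"
      by (rule ringcl_sum[OF ringcl_ispoly]) (rule ispoly_monom)
    then show ?thesis by (simp only: sum_component vector_scaleR_component) (simp add: scaleR_conv_of_real)
  qed
  have c: "ispoly (\<lambda>t. cnj ((\<Sum>i\<le>k. (t ^ i) *\<^sub>R C i) $ a $ b))" for a b
  proof -
    have "ispoly (\<lambda>t. \<Sum>i\<le>k. complex_of_real (t ^ i) * cnj (C i $ a $ b))"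
      by (rule ringcl_sum[OF ringcl_ispoly]) (rule ispoly_monom)
    then show ?thesis by (simp only: sum_component vector_scaleR_component) (simp add: scaleR_conv_of_real cnj_sum)
  qed
  have "ispoly (\<lambda>t. Delta (\<Sum>i\<le>k. (t ^ i) *\<^sub>R C i))"
    by (rule Delta_cl[OF ringcl_ispoly e c])
  then show ?thesis unfolding ispoly_def .
qed

lemma path_good_near_0:
  fixes C :: "nat \<Rightarrow> complex^'n^'m" and k :: nat
  defines "p \<equiv> (\<lambda>t::real. \<Sum>i\<le>k. (t ^ i) *\<^sub>R C i)"
  assumes d1: "Delta (p 1) \<noteq> 0" and e: "e > 0"
  shows "\<exists>t \<in> {0..1}. Delta (p t) \<noteq> 0 \<and> dist (p t) (p 0) < e"
proof -
  obtain r where r: "\<And>t. Delta (p t) = poly r (complex_of_real t)"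
    using path_Delta_poly[of C k] unfolding p_def by blast
  have "r \<noteq> 0" using d1 r[of 1] by auto
  then have fin: "finite {z. poly r z = 0}" by (rule poly_roots_finite)
  have "{t. Delta (p t) = 0} \<subseteq> Re ` {z. poly r z = 0}"
  proof
    fix t assume "t \<in> {t. Delta (p t) = 0}"
    then have "poly r (complex_of_real t) = 0" using r by simp
    then show "t \<in> Re ` {z. poly r z = 0}" by (intro image_eqI[of _ _ "complex_of_real t"]) auto
  qed
  then have finZ: "finite {t. Delta (p t) = 0}" using fin by (rule finite_subset[OF _ finite_imageI])
  have cont: "continuous_on UNIV p" unfolding p_def
    by (intro continuous_intros)
  then have "isCont p 0" by (simp add: continuous_on_eq_continuous_at)
  then obtain d where d: "d > 0" "\<And>t. dist t 0 < d \<Longrightarrow> dist (p t) (p 0) < e"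
    using e unfolding continuous_at_eps_delta by blast
  define m where "m = min d 1"
  have m: "m > 0" "m \<le> 1" "m \<le> d" using d unfolding m_def by auto
  have "infinite {0<..<m}" using m by (simp add: infinite_Ioo)
  then have "\<not> {0<..<m} \<subseteq> {t. Delta (p t) = 0}" using finZ finite_subset by blast
  then obtain t where t: "t \<in> {0<..<m}" "Delta (p t) \<noteq> 0" by blast
  have "dist (p t) (p 0) < e" using t m by (intro d(2)) (simp add: dist_real_def)
  moreover have "t \<in> {0..1}" using t m by auto
  ultimately show ?thesis using t by blast
qed

theorem theorem3p16:
  fixes \<Gamma> :: "(complex^'n^'m) set"
  assumes mn: "CARD('n) \<le> CARD('m)"
    and nonempty: "\<Gamma> \<noteq> {}"
    and polyconn: "\<And>A B. A \<in> \<Gamma> \<Longrightarrow> B \<in> \<Gamma> \<Longrightarrow>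
       \<exists>(k::nat) (C :: nat \<Rightarrow> complex^'n^'m).
          (let p = (\<lambda>t::real. \<Sum>i\<le>k. (t ^ i) *\<^sub>R C i) in
             p 0 = A \<and> p 1 = B \<and> (\<forall>t\<in>{0..1}. p t \<in> \<Gamma>))"
  shows "\<Gamma> \<subseteq> closure {A \<in> \<Gamma>. distinct_singular_values A} \<longleftrightarrow>
         (\<exists>A \<in> closure \<Gamma>. distinct_singular_values A)"
proof
  assume h: "\<Gamma> \<subseteq> closure {A \<in> \<Gamma>. distinct_singular_values A}"
  obtain A where "A \<in> \<Gamma>" using nonempty by blast
  then have "A \<in> closure {A \<in> \<Gamma>. distinct_singular_values A}" using h by blast
  then have "{A \<in> \<Gamma>. distinct_singular_values A} \<noteq> {}" by (metis closure_empty empty_iff)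
  then obtain A' where "A' \<in> \<Gamma>" "distinct_singular_values A'" by blast
  then show "\<exists>A \<in> closure \<Gamma>. distinct_singular_values A" using closure_subset by blast
next
  assume "\<exists>A \<in> closure \<Gamma>. distinct_singular_values A"
  then obtain A0 where A0: "A0 \<in> closure \<Gamma>" "distinct_singular_values A0" by blast
  obtain e where e: "e > 0" "ball A0 e \<subseteq> {A. distinct_singular_values A}"
    using D_open A0(2) by (metis mem_Collect_eq open_contains_ball)
  obtain A1 where A1: "A1 \<in> \<Gamma>" "dist A1 A0 < e" using A0(1) e(1) unfolding closure_approachable by blast
  have "A1 \<in> ball A0 e" using A1(2) by (simp add: dist_commute)
  then have A1d: "Delta A1 \<noteq> 0" using e(2) D_iff by blast
  show "\<Gamma> \<subseteq> closure {A \<in> \<Gamma>. distinct_singular_values A}"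
  proof
    fix B assume B: "B \<in> \<Gamma>"
    obtain k and C :: "nat \<Rightarrow> complex^'n^'m" where
      pc: "(\<Sum>i\<le>k. (0 ^ i) *\<^sub>R C i) = B" "(\<Sum>i\<le>k. (1 ^ i) *\<^sub>R C i) = A1"
          "\<forall>t\<in>{0..1}. (\<Sum>i\<le>k. (t ^ i) *\<^sub>R C i) \<in> \<Gamma>"
      using polyconn[OF B A1(1)] unfolding Let_def by blast
    define p where "p = (\<lambda>t::real. \<Sum>i\<le>k. (t ^ i) *\<^sub>R C i)"
    have p0: "p 0 = B" and p1: "p 1 = A1" and pG: "\<And>t. t \<in> {0..1} \<Longrightarrow> p t \<in> \<Gamma>"
      using pc unfolding p_def by auto
    show "B \<in> closure {A \<in> \<Gamma>. distinct_singular_values A}"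
      unfolding closure_approachable
    proof (intro allI impI)
      fix \<epsilon> :: real assume "\<epsilon> > 0"
      then obtain t where t: "t \<in> {0..1}" "Delta (p t) \<noteq> 0" "dist (p t) (p 0) < \<epsilon>"
        using path_good_near_0[of C k \<epsilon>] A1d p1 unfolding p_def by blast
      then show "\<exists>y\<in>{A \<in> \<Gamma>. distinct_singular_values A}. dist y B < \<epsilon>"
        using pG[OF t(1)] p0 D_iff by auto
    qed
  qed
qed

end
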